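(* For integers $0\le a<b$ let $\Delta^{(odd)}_3([a,b))$ denote the number of odd evil integers in $[a,b)$ divisible by $3$ minus the number of odd odious integers in $[a,b)$ divisible by $3$. Then: 1) $\Delta^{(odd)}_3([0,2^n))=3^{\lfloor n/2\rfloor-1}$ for all integers $n\ge 2$. 2) For integers $n,m$: $$\Delta^{(odd)}_3([2^n,2^n+2^m))=\begin{cases}0, & n \text{ and } m \text{ even},\ 2\le m\le n-2,\\ 3^{\frac{m-2}{2}}, & n \text{ odd},\ m \text{ even},\ 2\le m\le n-1,\\ -3^{\frac{m-3}{2}}, & n \text{ even},\ m \text{ odd},\ 3\le m\le n-1,\\ 2\cdot 3^{\frac{m-3}{2}}, & n \text{ and } m \text{ odd},\ 3\le m\le n-2.\end{cases}$$ 3) For integers $n,m$: $$\Delta^{(odd)}_3([2^n+2^{n-2},\,2^n+2^{n-2}+2^m))=\begin{cases}-3^{\frac{m-2}{2}}, & n \text{ and } m \text{ even},\ 2\le m\le n-4,\\ 0, & n \text{ odd},\ m \text{ even},\ 2\le m\le n-3,\\ -2\cdot 3^{\frac{m-3}{2}}, & n \text{ even},\ m \text{ odd},\ 3\le m\le n-3,\\ 3^{\frac{m-3}{2}}, & n \text{ and } m \text{ odd},\ 3\le m\le n-4.\end{cases}$$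
   Context: A nonnegative integer is called evil if its binary expansion contains an even number of 1's, and odious if it contains an odd number of 1's; in particular $0$ is evil. An interval $[a,b)$ means the set of integers $x$ with $a\le x<b$. *)

theory Defs
  imports Main
begin

fun ones :: "nat \<Rightarrow> nat" where
  "ones n = (if n = 0 then 0 else n mod 2 + ones (n div 2))"

declare ones.simps[simp del]

definition evil :: "nat \<Rightarrow> bool" where
  "evil x \<longleftrightarrow> even (ones x)"

definition odious :: "nat \<Rightarrow> bool" where
  "odious x \<longleftrightarrow> odd (ones x)"

definition delta_odd3 :: "nat \<Rightarrow> nat \<Rightarrow> int" where
  "delta_odd3 a b =
     int (card {x \<in> {a..<b}. odd x \<and> 3 dvd x \<and> evil x})
   - int (card {x \<in> {a..<b}. odd x \<and> 3 dvd x \<and> odious x})"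

end

theory Submission imports Defs begin

lemma ones_rec: "ones x = x mod 2 + ones (x div 2)"
  by (cases "x = 0") (simp_all add: ones.simps[of x] ones.simps[of 0])

lemma ones0[simp]: "ones 0 = 0" by (simp add: ones.simps)

lemma ones1[simp]: "ones (Suc 0) = 1" by (simp add: ones.simps)

lemma ones_add: "y < 2^m \<Longrightarrow> ones (c * 2^m + y) = ones c + ones y"
proof (induction m arbitrary: y)
  case 0 then show ?case by simp
next
  case (Suc m)
  have e: "c * 2^Suc m + y = 2*(c*2^m) + y" by simp
  have a: "(c * 2^Suc m + y) mod 2 = y mod 2" unfolding e by simp
  have b: "(c * 2^Suc m + y) div 2 = c * 2^m + y div 2" unfolding e by simp
  have "y div 2 < 2^m" using Suc.prems by simp
  then have "ones (c * 2^m + y div 2) = ones c + ones (y div 2)" using Suc.IH by blast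
  then show ?case using a b ones_rec[of "c * 2^Suc m + y"] ones_rec[of y] by simp
qed

definition g :: "nat \<Rightarrow> nat \<Rightarrow> int" where
  "g r x = (if odd x \<and> x mod 3 = r then (-1)^ones x else 0)"

definition f :: "nat \<Rightarrow> nat \<Rightarrow> int" where
  "f m r = (\<Sum>y<2^m. g r y)"

lemma delta_sum: "delta_odd3 a b = (\<Sum>x\<in>{a..<b}. g 0 x)"
proof -
  let ?A = "{a..<b}"
  let ?P = "\<lambda>x. odd x \<and> 3 dvd x"
  have 1: "(\<Sum>x\<in>?A. g 0 x) = (\<Sum>x\<in>?A. (if ?P x \<and> evil x then 1 else 0) - (if ?P x \<and> odious x then 1 else 0))"
    by (rule sum.cong) (auto simp: g_def evil_def odious_def)
  have 2: "\<And>Q. (\<Sum>x\<in>?A. (if Q x then 1 else 0::int)) = int (card {x\<in>?A. Q x})"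
    by (simp add: sum.If_cases Int_def)
  show ?thesis unfolding delta_odd3_def 1 sum_subtractf 2 by simp
qed

lemma pow2mod: "(2::nat)^m mod 3 = (if even m then 1 else 2)"
proof (induction m)
  case 0 then show ?case by simp
next
  case (Suc m)
  have "(2::nat)^Suc m mod 3 = (2 * (2^m mod 3)) mod 3" by (simp add: mod_mult_right_eq)
  then show ?case using Suc by auto
qed

lemma mod3_lemma: "(r::nat) < 3 \<Longrightarrow> ((a + y) mod 3 = r) = (y mod 3 = (r + 3 - a mod 3) mod 3)"
proof -
  assume r: "r < 3"
  have s: "(a + y) mod 3 = (a mod 3 + y mod 3) mod 3" by (simp add: mod_add_eq)
  have A: "a mod 3 = 0 \<or> a mod 3 = 1 \<or> a mod 3 = 2" by presburger
  have Y: "y mod 3 = 0 \<or> y mod 3 = 1 \<or> y mod 3 = 2" by presburger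
  have R: "r = 0 \<or> r = 1 \<or> r = 2" using r by presburger
  show ?thesis unfolding s using A Y R by (elim disjE) simp_all
qed

lemma gshift:
  assumes "1 \<le> m" "y < 2^m" "r < 3"
  shows "g r (c*2^m + y) = (-1)^ones c * g ((r + 3 - (c*2^m) mod 3) mod 3) y"
proof -
  have ev: "even (c*2^m)" using assms(1) by (cases m) auto
  have o: "odd (c*2^m + y) = odd y" using ev by auto
  have md: "((c*2^m + y) mod 3 = r) = (y mod 3 = (r + 3 - (c*2^m) mod 3) mod 3)"
    using assms(3) mod3_lemma by blast
  show ?thesis unfolding g_def o md ones_add[OF assms(2)] by (simp add: power_add)
qed

lemma sumshift:
  assumes "1 \<le> m" "r < 3"
  shows "(\<Sum>x\<in>{c*2^m..<c*2^m+2^m}. g r x) = (-1)^ones c * f m ((r + 3 - (c*2^m) mod 3) mod 3)"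
proof -
  have "(\<Sum>x\<in>{c*2^m..<c*2^m+2^m}. g r x) = (\<Sum>y\<in>{0..<2^m}. g r (y + c*2^m))"
    using sum.shift_bounds_nat_ivl[of "g r" 0 "c*2^m" "2^m"] by (simp add: add.commute)
  also have "\<dots> = (\<Sum>y<2^m. (-1)^ones c * g ((r + 3 - (c*2^m) mod 3) mod 3) y)"
    by (rule sum.cong) (auto simp: atLeast0LessThan gshift[OF assms(1) _ assms(2)] add.commute[of _ "c*2^m"])
  finally show ?thesis by (simp add: f_def sum_distrib_left)
qed

lemma f_rec:
  assumes "1 \<le> m" "r < 3"
  shows "f (Suc m) r = f m r - f m ((r + 3 - 2^m mod 3) mod 3)"
proof -
  have "f (Suc m) r = (\<Sum>y<2^m + 2^m. g r y)" by (simp add: f_def mult_2)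
  also have "\<dots> = f m r + (\<Sum>x\<in>{1*2^m..<1*2^m+2^m}. g r x)"
    using sum.atLeastLessThan_concat[of 0 "2^m" "2^m+2^m" "g r"] by (simp add: f_def atLeast0LessThan)
  also have "\<dots> = f m r - f m ((r + 3 - 2^m mod 3) mod 3)"
    using sumshift[OF assms, of 1] by simp
  finally show ?thesis .
qed

lemma f1: "f (Suc 0) r = (if r = 1 then -1 else 0)"
  by (simp add: f_def g_def lessThan_Suc numeral_2_eq_2)

lemma f_rec_even:
  assumes "1 \<le> m" "even m"
  shows "f (Suc m) 0 = f m 0 - f m 2 \<and> f (Suc m) 1 = f m 1 - f m 0 \<and> f (Suc m) 2 = f m 2 - f m 1"
proof -
  have p: "(2::nat)^m mod 3 = 1" using assms(2) by (simp add: pow2mod)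
  show ?thesis using f_rec[OF assms(1), of 0] f_rec[OF assms(1), of 1] f_rec[OF assms(1), of 2]
    unfolding p by simp
qed

lemma f_rec_odd:
  assumes "1 \<le> m" "odd m"
  shows "f (Suc m) 0 = f m 0 - f m 1 \<and> f (Suc m) 1 = f m 1 - f m 2 \<and> f (Suc m) 2 = f m 2 - f m 0"
proof -
  have p: "(2::nat)^m mod 3 = 2" using assms(2) by (simp add: pow2mod)
  show ?thesis using f_rec[OF assms(1), of 0] f_rec[OF assms(1), of 1] f_rec[OF assms(1), of 2]
    unfolding p by simp
qed

lemma f_closed: "f (2*k+2) 0 = 3^k \<and> f (2*k+2) 1 = - (3^k) \<and> f (2*k+2) 2 = 0
  \<and> f (2*k+3) 0 = 3^k \<and> f (2*k+3) 1 = - (2*3^k) \<and> f (2*k+3) 2 = 3^k"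
proof (induction k)
  case 0
  have a: "f (Suc (Suc 0)) 0 = 1 \<and> f (Suc (Suc 0)) 1 = -1 \<and> f (Suc (Suc 0)) 2 = 0"
    using f_rec_odd[of "Suc 0"] by (simp add: f1)
  have b: "f (Suc (Suc (Suc 0))) 0 = 1 \<and> f (Suc (Suc (Suc 0))) 1 = -2 \<and> f (Suc (Suc (Suc 0))) 2 = 1"
    using f_rec_even[of "Suc (Suc 0)"] a by simp
  have e: "2 * 0 + 2 = Suc (Suc 0)" "2 * 0 + 3 = Suc (Suc (Suc 0))" by simp_all
  show ?case unfolding e using a b by simp
next
  case (Suc k)
  define m where "m = 2*k+3"
  have e1: "2 * Suc k + 2 = Suc m" "2 * Suc k + 3 = Suc (Suc m)" "2*k+3 = m" by (simp_all add: m_def)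
  have m1: "1 \<le> m" "odd m" "1 \<le> Suc m" "even (Suc m)" by (simp_all add: m_def)
  have IH: "f m 0 = 3^k" "f m 1 = - (2*3^k)" "f m 2 = 3^k" using Suc.IH unfolding e1 by simp_all
  have a: "f (Suc m) 0 = 3^Suc k" "f (Suc m) 1 = -(3^Suc k)" "f (Suc m) 2 = 0"
    using f_rec_odd[OF m1(1,2)] IH by simp_all
  have b: "f (Suc (Suc m)) 0 = 3^Suc k" "f (Suc (Suc m)) 1 = -(2*3^Suc k)"
     "f (Suc (Suc m)) 2 = 3^Suc k"
    using f_rec_even[OF m1(3,4)] a by simp_all
  show ?case unfolding e1 using a b by simp
qed

lemma delta_block:
  assumes "1 \<le> m"
  shows "delta_odd3 (c*2^m) (c*2^m+2^m) = (-1)^ones c * f m ((3 - (c*2^m) mod 3) mod 3)"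
  using sumshift[OF assms, of 0 c] by (simp add: delta_sum)

lemma ones_pow2: "ones (2^j) = 1"
  using ones_add[of 0 j 1] by simp

lemma ones5: "ones 5 = 2"
  using ones_rec[of 5] ones_rec[of 2] by simp

lemma f_even: "even m \<Longrightarrow> 2 \<le> m \<Longrightarrow> f m 0 = 3^((m-2) div 2) \<and> f m 1 = - (3^((m-2) div 2)) \<and> f m 2 = 0"
proof -
  assume "even m" "2 \<le> m"
  then obtain j where "m = 2*j" by (auto elim!: evenE)
  then have k: "m = 2*(j-1)+2" using \<open>2 \<le> m\<close> by simp
  define k where "k = j - 1"
  show ?thesis using f_closed[of k] unfolding k k_def by simp
qed

lemma f_odd: "odd m \<Longrightarrow> 3 \<le> m \<Longrightarrow> f m 0 = 3^((m-3) div 2) \<and> f m 1 = - (2*3^((m-3) div 2)) \<and> f m 2 = 3^((m-3) div 2)"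
proof -
  assume "odd m" "3 \<le> m"
  then obtain j where "m = 2*j+1" by (auto elim!: oddE)
  then have k: "m = 2*(j-1)+3" using \<open>3 \<le> m\<close> by simp
  define k where "k = j - 1"
  show ?thesis using f_closed[of k] unfolding k k_def by simp
qed

lemma part1: "n \<ge> 2 \<Longrightarrow> delta_odd3 0 (2^n) = 3 ^ (n div 2 - 1)"
proof -
  assume n: "n \<ge> 2"
  have d: "delta_odd3 0 (2^n) = f n 0" using delta_block[of n 0] n by simp
  show ?thesis
  proof (cases "even n")
    case True
    have "(n-2) div 2 = n div 2 - 1" using n by simp
    then show ?thesis using f_even[of n] n d True by simp
  next
    case False
    then have "n \<noteq> 2" by auto
    then have "3 \<le> n" using n by simp
    moreover have "(n-3) div 2 = n div 2 - 1"
    proof -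
      obtain j where "n = 2*j+1" using False by (auto elim!: oddE)
      then show ?thesis by simp
    qed
    ultimately show ?thesis using f_odd[of n] False d by simp
  qed
qed

lemma part2: "m + 1 \<le> n \<Longrightarrow> 1 \<le> m \<Longrightarrow>
  delta_odd3 (2^n) (2^n+2^m) = - f m (if even n then 2 else 1)"
proof -
  assume a: "m + 1 \<le> n" "1 \<le> m"
  have e: "(2::nat)^n = 2^(n-m) * 2^m" using a by (simp add: power_add[symmetric])
  show ?thesis using delta_block[OF a(2), of "2^(n-m)"] unfolding e[symmetric]
    by (simp add: ones_pow2 pow2mod)
qed

lemma aux5: "(5::nat)*x mod 3 = (2*(x mod 3)) mod 3"
proof -
  have e: "(5::nat)*x = 2*x + 3*x" by simp
  have "(5::nat)*x mod 3 = (2*x + 3*x) mod 3" by (subst e) (rule refl)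
  also have "\<dots> = (2*x) mod 3" by (simp only: mod_mult_self2)
  also have "\<dots> = (2*(x mod 3)) mod 3" by (simp add: mod_mult_right_eq)
  finally show ?thesis .
qed

lemma part3: "m + 3 \<le> n \<Longrightarrow> 1 \<le> m \<Longrightarrow>
  delta_odd3 (2^n + 2^(n-2)) (2^n + 2^(n-2)+2^m) = f m (if even n then 1 else 2)"
proof -
  assume a: "m + 3 \<le> n" "1 \<le> m"
  have e: "(2::nat)^n + 2^(n-2) = (5 * 2^(n-2-m)) * 2^m"
  proof -
    have "n = (n-2)+2" using a by simp
    then have "(2::nat)^n = 2^((n-2)+2)" by simp
    also have "\<dots> = 4 * 2^(n-2)" by (simp add: power_add)
    finally have "(2::nat)^n = 4 * 2^(n-2)" .
    moreover have "(2::nat)^(n-2) = 2^(n-2-m) * 2^m" using a by (simp add: power_add[symmetric])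
    ultimately show ?thesis by simp
  qed
  have o: "ones (5 * 2^(n-2-m)) = 2" using ones_add[of 0 "n-2-m" 5] by (simp add: ones5)
  have md: "(5 * 2^(n-2-m) * 2^m) mod 3 = (if even n then 2 else (1::nat))"
  proof -
    have eq: "(5 * 2^(n-2-m) * (2::nat)^m) = 5 * 2^(n-2)" using a by (simp add: power_add[symmetric])
    have ev: "even (n-2) = even n" using a by auto
    have p: "(2::nat)^(n-2) mod 3 = (if even n then 1 else 2)" using pow2mod[of "n-2"] ev by simp
    show ?thesis unfolding eq aux5 p by simp
  qed
  show ?thesis using delta_block[OF a(2), of "5 * 2^(n-2-m)"] unfolding e[symmetric] o md[unfolded e[symmetric]]
    by simp
qed

theorem theorem2:
  shows "(\<forall>n::nat. n \<ge> 2 \<longrightarrow> delta_odd3 0 (2^n) = 3 ^ (n div 2 - 1))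
   \<and> (\<forall>n m::nat.
        (even n \<and> even m \<and> 2 \<le> m \<and> m + 2 \<le> n \<longrightarrow>
           delta_odd3 (2^n) (2^n + 2^m) = 0)
      \<and> (odd n \<and> even m \<and> 2 \<le> m \<and> m + 1 \<le> n \<longrightarrow>
           delta_odd3 (2^n) (2^n + 2^m) = 3 ^ ((m - 2) div 2))
      \<and> (even n \<and> odd m \<and> 3 \<le> m \<and> m + 1 \<le> n \<longrightarrow>
           delta_odd3 (2^n) (2^n + 2^m) = - (3 ^ ((m - 3) div 2)))
      \<and> (odd n \<and> odd m \<and> 3 \<le> m \<and> m + 2 \<le> n \<longrightarrow>
           delta_odd3 (2^n) (2^n + 2^m) = 2 * 3 ^ ((m - 3) div 2)))
   \<and> (\<forall>n m::nat.
        (even n \<and> even m \<and> 2 \<le> m \<and> m + 4 \<le> n \<longrightarrow>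
           delta_odd3 (2^n + 2^(n-2)) (2^n + 2^(n-2) + 2^m) = - (3 ^ ((m - 2) div 2)))
      \<and> (odd n \<and> even m \<and> 2 \<le> m \<and> m + 3 \<le> n \<longrightarrow>
           delta_odd3 (2^n + 2^(n-2)) (2^n + 2^(n-2) + 2^m) = 0)
      \<and> (even n \<and> odd m \<and> 3 \<le> m \<and> m + 3 \<le> n \<longrightarrow>
           delta_odd3 (2^n + 2^(n-2)) (2^n + 2^(n-2) + 2^m) = - (2 * 3 ^ ((m - 3) div 2)))
      \<and> (odd n \<and> odd m \<and> 3 \<le> m \<and> m + 4 \<le> n \<longrightarrow>
           delta_odd3 (2^n + 2^(n-2)) (2^n + 2^(n-2) + 2^m) = 3 ^ ((m - 3) div 2)))"
proof (intro conjI allI impI)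
  fix n :: nat assume "n \<ge> 2" then show "delta_odd3 0 (2^n) = 3 ^ (n div 2 - 1)" by (rule part1)
next
  fix n m :: nat assume h: "even n \<and> even m \<and> 2 \<le> m \<and> m + 2 \<le> n"
  then show "delta_odd3 (2^n) (2^n + 2^m) = 0" using part2[of m n] f_even[of m] by simp
next
  fix n m :: nat assume h: "odd n \<and> even m \<and> 2 \<le> m \<and> m + 1 \<le> n"
  then show "delta_odd3 (2^n) (2^n + 2^m) = 3 ^ ((m - 2) div 2)" using part2[of m n] f_even[of m] by simp
next
  fix n m :: nat assume h: "even n \<and> odd m \<and> 3 \<le> m \<and> m + 1 \<le> n"
  then show "delta_odd3 (2^n) (2^n + 2^m) = - (3 ^ ((m - 3) div 2))" using part2[of m n] f_odd[of m] by simp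
next
  fix n m :: nat assume h: "odd n \<and> odd m \<and> 3 \<le> m \<and> m + 2 \<le> n"
  then show "delta_odd3 (2^n) (2^n + 2^m) = 2 * 3 ^ ((m - 3) div 2)" using part2[of m n] f_odd[of m] by simp
next
  fix n m :: nat assume h: "even n \<and> even m \<and> 2 \<le> m \<and> m + 4 \<le> n"
  then show "delta_odd3 (2^n + 2^(n-2)) (2^n + 2^(n-2) + 2^m) = - (3 ^ ((m - 2) div 2))"
    using part3[of m n] f_even[of m] by simp
next
  fix n m :: nat assume h: "odd n \<and> even m \<and> 2 \<le> m \<and> m + 3 \<le> n"
  then show "delta_odd3 (2^n + 2^(n-2)) (2^n + 2^(n-2) + 2^m) = 0"
    using part3[of m n] f_even[of m] by simp
next
  fix n m :: nat assume h: "even n \<and> odd m \<and> 3 \<le> m \<and> m + 3 \<le> n"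
  then show "delta_odd3 (2^n + 2^(n-2)) (2^n + 2^(n-2) + 2^m) = - (2 * 3 ^ ((m - 3) div 2))"
    using part3[of m n] f_odd[of m] by simp
next
  fix n m :: nat assume h: "odd n \<and> odd m \<and> 3 \<le> m \<and> m + 4 \<le> n"
  then show "delta_odd3 (2^n + 2^(n-2)) (2^n + 2^(n-2) + 2^m) = 3 ^ ((m - 3) div 2)"
    using part3[of m n] f_odd[of m] by simp
qed

end
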